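(* For the log-loss $\ell_{\log}(\mathrm{h},(x,y))=-\log\mathrm{h}(y|x)$ and training instances $x_1,\dots,x_n$, the problem $\mathscr{P}_{x,\ell_{\log}}^{\mathbf{a},\mathbf{b}}$ is equivalent to $$\mathscr{P}_{x,\log}^{\mathbf{a},\mathbf{b}}:\ \min_{\boldsymbol{\mu},\boldsymbol{\eta}}\ \tfrac{1}{2}(\mathbf{b}-\mathbf{a})^{\mathrm{T}}\boldsymbol{\eta}-\tfrac{1}{2}(\mathbf{b}+\mathbf{a})^{\mathrm{T}}\boldsymbol{\mu}-\frac{1}{n}\sum_{i=1}^n\varphi_{\log}(\boldsymbol{\mu},x_i)\ \text{ s.t. }\boldsymbol{\eta}+\boldsymbol{\mu}\succeq\mathbf{0},\ \boldsymbol{\eta}-\boldsymbol{\mu}\succeq\mathbf{0},$$ with $\varphi_{\log}(\boldsymbol{\mu},x)=-\log\sum_{y\in\mathcal{Y}}\exp\{\Phi(x,y)^{\mathrm{T}}\boldsymbol{\mu}\}$. In addition, for a solution $\boldsymbol{\mu}^*,\boldsymbol{\eta}^*$ of $\mathscr{P}_{x,\log}^{\mathbf{a},\mathbf{b}}$, the condition $\ell_{\log}(\mathrm{h},(x,y))+\Phi(x,y)^{\mathrm{T}}\boldsymbol{\mu}^*+\varphi_{\ell_{\log}}(\boldsymbol{\mu}^*,x)\leq0$ for all $x,y$ (which makes $\mathrm{h}$ a log-MRC for $\mathcal{U}_x^{\mathbf{a},\mathbf{b}}$) becomes $$\mathrm{h}(y|x)=\exp\{\Phi(x,y)^{\mathrm{T}}\boldsymbol{\mu}^*+\varphi_{\log}(\boldsymbol{\mu}^*,x)\}=\Big(\sum_{i\in\mathcal{Y}}\exp\{(\Phi(x,i)-\Phi(x,y))^{\mathrm{T}}\boldsymbol{\mu}^*\}\Big)^{-1}\quad\forall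 x,y.$$
   Context: Let $\mathcal{X},\mathcal{Y}$ be finite nonempty sets, $\mathcal{Y}=\{1,\dots,|\mathcal{Y}|\}$; $\Delta(\mathcal{Z})$ the probability distributions on a finite set $\mathcal{Z}$. A classification rule $\mathrm{h}$ assigns to each $x$ a distribution $\mathrm{h}(\cdot|x)\in\Delta(\mathcal{Y})$. For a score function $L$ (loss $\ell(\mathrm{h},(x,y))=L(\mathrm{h}(\cdot|x),y)$): $\Phi:\mathcal{X}\times\mathcal{Y}\to\mathbb{R}^m$ is a feature mapping, $\boldsymbol{\Phi}(x,\cdot)$ the $|\mathcal{Y}|\times m$ matrix with rows $\Phi(x,y)^{\mathrm{T}}$, $\mathbf{1}$ the all-ones vector, $\preceq,\succeq$ componentwise, $\mathcal{L}=\{\mathbf{c}\in\mathbb{R}^{|\mathcal{Y}|}:\exists\,\mathrm{q}\in\Delta(\mathcal{Y}),\ \mathbf{c}+(L(\mathrm{q},y))_{y}\preceq\mathbf{0}\}$, $\varphi_\ell(\boldsymbol{\mu},x)=\max\{\nu:\boldsymbol{\Phi}(x,\cdot)\boldsymbol{\mu}+\nu\mathbf{1}\in\mathcal{L}\}$, and $\mathscr{P}_{x,\ell}^{\mathbf{a},\mathbf{b}}$ is $\min_{\boldsymbol{\mu},\boldsymbol{\eta}}\tfrac12(\mathbf{b}-\mathbf{a})^{\mathrm{T}}\boldsymbol{\eta}-\tfrac12(\mathbf{b}+\mathbf{a})^{\mathrm{T}}\boldsymbol{\mu}-\frac1n\sum_{i=1}^n\varphi_\ell(\boldsymbol{\mu},x_i)$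 s.t. $\boldsymbol{\eta}\pm\boldsymbol{\mu}\succeq\mathbf{0}$. With $\mathrm{p}_n$ the empirical distribution of $x_1,\dots,x_n$, $\mathcal{U}_x^{\mathbf{a},\mathbf{b}}=\{\mathrm{p}\in\Delta(\mathcal{X}\times\mathcal{Y}):\mathbf{a}\preceq\mathbb{E}_{\mathrm{p}}\{\Phi\}\preceq\mathbf{b},\ \sum_y\mathrm{p}(x,y)=\mathrm{p}_n(x)\ \forall x\}$, and an $\ell$-MRC for $\mathcal{U}$ minimizes $\max_{\mathrm{p}\in\mathcal{U}}\sum_{x,y}\mathrm{p}(x,y)\ell(\mathrm{h},(x,y))$ over all classification rules. *)

theory Defs
  imports "HOL-Analysis.Analysis"
begin

text \<open>A score function is L :: ('y => real) => 'y => ereal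
  (extended real, since log-loss can be +infinity).\<close>

definition prob_dist :: "('y::finite \<Rightarrow> real) \<Rightarrow> bool" where
  "prob_dist q \<longleftrightarrow> (\<forall>y. 0 \<le> q y) \<and> (\<Sum>y\<in>UNIV. q y) = 1"

definition class_rule :: "('x \<Rightarrow> 'y::finite \<Rightarrow> real) \<Rightarrow> bool" where
  "class_rule h \<longleftrightarrow> (\<forall>x. prob_dist (h x))"

definition L_log :: "('y \<Rightarrow> real) \<Rightarrow> 'y \<Rightarrow> ereal" where
  "L_log q y = (if q y = 0 then \<infinity> else ereal (- ln (q y)))"

definition loss_of :: "(('y \<Rightarrow> real) \<Rightarrow> 'y \<Rightarrow> ereal) \<Rightarrow> ('x \<Rightarrow> 'y \<Rightarrow> real) \<Rightarrow> 'x \<Rightarrow> 'y \<Rightarrow> ereal" where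
  "loss_of L h x y = L (h x) y"

definition calL :: "(('y::finite \<Rightarrow> real) \<Rightarrow> 'y \<Rightarrow> ereal) \<Rightarrow> ('y \<Rightarrow> real) set" where
  "calL L = {c. \<exists>q. prob_dist q \<and> (\<forall>y. ereal (c y) + L q y \<le> 0)}"

definition phi_ell :: "(('y::finite \<Rightarrow> real) \<Rightarrow> 'y \<Rightarrow> ereal) \<Rightarrow> ('x \<Rightarrow> 'y \<Rightarrow> real^'m)
     \<Rightarrow> real^'m \<Rightarrow> 'x \<Rightarrow> real" where
  "phi_ell L Phi \<mu> x = (GREATEST \<nu>::real. (\<lambda>y. Phi x y \<bullet> \<mu> + \<nu>) \<in> calL L)"

definition phi_log :: "('x \<Rightarrow> 'y::finite \<Rightarrow> real^'m) \<Rightarrow> real^'m \<Rightarrow> 'x \<Rightarrow> real" where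
  "phi_log Phi \<mu> x = - ln (\<Sum>y\<in>UNIV. exp (Phi x y \<bullet> \<mu>))"

definition mrc_obj :: "(real^'m \<Rightarrow> 'x \<Rightarrow> real) \<Rightarrow> real^'m \<Rightarrow> real^'m \<Rightarrow> 'x list
     \<Rightarrow> real^'m \<Rightarrow> real^'m \<Rightarrow> real" where
  "mrc_obj phi a b xs \<mu> \<eta> =
     (1/2) * ((b - a) \<bullet> \<eta>) - (1/2) * ((b + a) \<bullet> \<mu>)
     - (1 / real (length xs)) * (\<Sum>i<length xs. phi \<mu> (xs ! i))"

definition mrc_feasible :: "real^'m \<Rightarrow> real^'m \<Rightarrow> bool" where
  "mrc_feasible \<mu> \<eta> \<longleftrightarrow> (\<forall>i. 0 \<le> \<eta> $ i + \<mu> $ i \<and> 0 \<le> \<eta> $ i - \<mu> $ i)"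

definition obj_ell :: "(('y::finite \<Rightarrow> real) \<Rightarrow> 'y \<Rightarrow> ereal) \<Rightarrow> ('x \<Rightarrow> 'y \<Rightarrow> real^'m)
     \<Rightarrow> real^'m \<Rightarrow> real^'m \<Rightarrow> 'x list \<Rightarrow> real^'m \<Rightarrow> real^'m \<Rightarrow> real" where
  "obj_ell L Phi a b xs \<mu> \<eta> = mrc_obj (phi_ell L Phi) a b xs \<mu> \<eta>"

definition obj_log :: "('x \<Rightarrow> 'y::finite \<Rightarrow> real^'m)
     \<Rightarrow> real^'m \<Rightarrow> real^'m \<Rightarrow> 'x list \<Rightarrow> real^'m \<Rightarrow> real^'m \<Rightarrow> real" where
  "obj_log Phi a b xs \<mu> \<eta> = mrc_obj (phi_log Phi) a b xs \<mu> \<eta>"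

definition solves_log :: "('x \<Rightarrow> 'y::finite \<Rightarrow> real^'m)
     \<Rightarrow> real^'m \<Rightarrow> real^'m \<Rightarrow> 'x list \<Rightarrow> real^'m \<Rightarrow> real^'m \<Rightarrow> bool" where
  "solves_log Phi a b xs \<mu> \<eta> \<longleftrightarrow> mrc_feasible \<mu> \<eta> \<and>
     (\<forall>\<mu>' \<eta>'. mrc_feasible \<mu>' \<eta>' \<longrightarrow> obj_log Phi a b xs \<mu> \<eta> \<le> obj_log Phi a b xs \<mu>' \<eta>')"

end

theory Submission
  imports Defs
begin

lemma S_pos: "(0::real) < (\<Sum>y\<in>(UNIV::'y::finite set). exp (v y))"
  by (rule sum_pos) auto

lemma exp_sum_one:
  fixes v :: "'y::finite \<Rightarrow> real"
  shows "(\<Sum>y\<in>UNIV. exp (v y + - ln (\<Sum>y\<in>UNIV. exp (v y)))) = 1"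
proof -
  have S: "(\<Sum>y\<in>(UNIV::'y set). exp (v y)) > 0" by (rule S_pos)
  have "(\<Sum>y\<in>UNIV. exp (v y + - ln (\<Sum>y\<in>UNIV. exp (v y))))
      = (\<Sum>y\<in>UNIV. exp (v y) / (\<Sum>y\<in>UNIV. exp (v y)))"
    using S by (simp add: exp_diff)
  also have "\<dots> = 1" using S by (simp add: sum_divide_distrib[symmetric])
  finally show ?thesis .
qed

lemma calL_log_iff:
  fixes v :: "'y::finite \<Rightarrow> real"
  shows "(\<lambda>y. v y + \<nu>) \<in> calL L_log \<longleftrightarrow> \<nu> \<le> - ln (\<Sum>y\<in>UNIV. exp (v y))"
proof
  assume "(\<lambda>y. v y + \<nu>) \<in> calL L_log"
  then obtain q where q: "prob_dist q" and c: "\<And>y. ereal (v y + \<nu>) + L_log q y \<le> 0"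
    unfolding calL_def by blast
  have ge: "exp (v y + \<nu>) \<le> q y" for y
  proof -
    have c1: "ereal (v y + \<nu>) + L_log q y \<le> 0" by (rule c)
    have "q y \<noteq> 0" using c1 by (auto simp: L_log_def)
    moreover have "q y \<ge> 0" using q by (simp add: prob_dist_def)
    ultimately have qp: "q y > 0" by simp
    have "v y + \<nu> - ln (q y) \<le> 0" using c1 qp by (simp add: L_log_def)
    then have "exp (v y + \<nu>) \<le> exp (ln (q y))" by simp
    then show ?thesis using qp by simp
  qed
  have "(\<Sum>y\<in>UNIV. exp (v y + \<nu>)) \<le> (\<Sum>y\<in>UNIV. q y)" by (rule sum_mono) (rule ge)
  also have "\<dots> = 1" using q by (simp add: prob_dist_def)
  finally have "exp \<nu> * (\<Sum>y\<in>UNIV. exp (v y)) \<le> 1"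
    by (simp add: exp_add sum_distrib_left mult.commute)
  then have "ln (exp \<nu> * (\<Sum>y\<in>UNIV. exp (v y))) \<le> 0"
    using S_pos[of v] by (simp add: ln_le_zero_iff)
  then show "\<nu> \<le> - ln (\<Sum>y\<in>UNIV. exp (v y))"
    using S_pos[of v] by (simp add: ln_mult)
next
  assume le: "\<nu> \<le> - ln (\<Sum>y\<in>UNIV. exp (v y))"
  define q where "q y = exp (v y + - ln (\<Sum>y\<in>UNIV. exp (v y)))" for y
  have "prob_dist q" unfolding prob_dist_def q_def using exp_sum_one[of v] by simp
  moreover have "ereal (v y + \<nu>) + L_log q y \<le> 0" for y
    using le by (simp add: q_def L_log_def)
  ultimately show "(\<lambda>y. v y + \<nu>) \<in> calL L_log" unfolding calL_def by blast
qed

lemma phi_eq: "phi_ell L_log Phi \<mu> x = phi_log Phi \<mu> x"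
  unfolding phi_ell_def phi_log_def
proof (rule Greatest_equality)
  show "(\<lambda>y. Phi x y \<bullet> \<mu> + - ln (\<Sum>y\<in>UNIV. exp (Phi x y \<bullet> \<mu>))) \<in> calL L_log"
    by (rule calL_log_iff[where v="\<lambda>y. Phi x y \<bullet> \<mu>", THEN iffD2]) simp
next
  fix y assume "(\<lambda>ya. Phi x ya \<bullet> \<mu> + y) \<in> calL L_log"
  then show "y \<le> - ln (\<Sum>y\<in>UNIV. exp (Phi x y \<bullet> \<mu>))"
    by (rule calL_log_iff[where v="\<lambda>y. Phi x y \<bullet> \<mu>", THEN iffD1])
qed

theorem corollary8:
  fixes Phi :: "'x::finite \<Rightarrow> 'y::finite \<Rightarrow> real^'m"
    and a b :: "real^'m" and xs :: "'x list"
  assumes "xs \<noteq> []"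
  shows "(\<forall>\<mu> \<eta>. obj_ell L_log Phi a b xs \<mu> \<eta> = obj_log Phi a b xs \<mu> \<eta>) \<and>
    (\<forall>\<mu>s \<eta>s. solves_log Phi a b xs \<mu>s \<eta>s \<longrightarrow>
      (\<forall>h. class_rule h \<longrightarrow>
        ((\<forall>x y. loss_of L_log h x y + ereal (Phi x y \<bullet> \<mu>s + phi_ell L_log Phi \<mu>s x) \<le> 0)
         \<longleftrightarrow>
         (\<forall>x y. h x y = exp (Phi x y \<bullet> \<mu>s + phi_log Phi \<mu>s x) \<and>
                h x y = inverse (\<Sum>i\<in>UNIV. exp ((Phi x i - Phi x y) \<bullet> \<mu>s))))))"
proof (intro conjI allI impI)
  fix \<mu> \<eta> show "obj_ell L_log Phi a b xs \<mu> \<eta> = obj_log Phi a b xs \<mu> \<eta>"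
    unfolding obj_ell_def obj_log_def mrc_obj_def by (simp add: phi_eq)
next
  fix \<mu>s \<eta>s :: "real^'m" and h :: "'x \<Rightarrow> 'y \<Rightarrow> real"
  assume cr: "class_rule h"
  define s where "s x y = Phi x y \<bullet> \<mu>s + phi_log Phi \<mu>s x" for x y
  have sum1: "(\<Sum>y\<in>UNIV. exp (s x y)) = 1" for x
    unfolding s_def phi_log_def by (rule exp_sum_one)
  have inv: "exp (s x y) = inverse (\<Sum>i\<in>UNIV. exp ((Phi x i - Phi x y) \<bullet> \<mu>s))" for x y
  proof -
    let ?S = "\<Sum>i\<in>UNIV. exp (Phi x i \<bullet> \<mu>s)"
    have S: "?S > 0" by (rule S_pos)
    have "(\<Sum>i\<in>UNIV. exp ((Phi x i - Phi x y) \<bullet> \<mu>s)) = ?S / exp (Phi x y \<bullet> \<mu>s)"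
      by (simp add: inner_diff_left exp_diff sum_divide_distrib)
    moreover have "exp (s x y) = exp (Phi x y \<bullet> \<mu>s) / ?S"
      using S by (simp add: s_def phi_log_def exp_diff)
    ultimately show ?thesis by simp
  qed
  have hp: "prob_dist (h x)" for x using cr by (simp add: class_rule_def)
  show "(\<forall>x y. loss_of L_log h x y + ereal (Phi x y \<bullet> \<mu>s + phi_ell L_log Phi \<mu>s x) \<le> 0)
         \<longleftrightarrow>
         (\<forall>x y. h x y = exp (Phi x y \<bullet> \<mu>s + phi_log Phi \<mu>s x) \<and>
                h x y = inverse (\<Sum>i\<in>UNIV. exp ((Phi x i - Phi x y) \<bullet> \<mu>s)))"
    unfolding phi_eq s_def[symmetric] inv[symmetric]
  proof
    assume A: "\<forall>x y. loss_of L_log h x y + ereal (s x y) \<le> 0"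
    have ge: "exp (s x y) \<le> h x y" for x y
    proof -
      have c1: "loss_of L_log h x y + ereal (s x y) \<le> 0" using A by blast
      have "h x y \<noteq> 0" using c1 by (auto simp: L_log_def loss_of_def)
      moreover have "h x y \<ge> 0" using hp[of x] by (simp add: prob_dist_def)
      ultimately have qp: "h x y > 0" by simp
      have "s x y - ln (h x y) \<le> 0" using c1 qp by (simp add: L_log_def loss_of_def)
      then have "exp (s x y) \<le> exp (ln (h x y))" by simp
      then show ?thesis using qp by simp
    qed
    have "h x y = exp (s x y)" for x y
    proof -
      have "(\<Sum>y\<in>UNIV. h x y - exp (s x y)) = 0"
        using hp[of x] sum1[of x] by (simp add: sum_subtractf prob_dist_def)
      then have "\<forall>y\<in>UNIV. h x y - exp (s x y) = 0"
        by (subst sum_nonneg_eq_0_iff[symmetric]) (auto simp: ge)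
      then show ?thesis by simp
    qed
    then show "\<forall>x y. h x y = exp (s x y) \<and> h x y = exp (s x y)" by simp
  next
    assume "\<forall>x y. h x y = exp (s x y) \<and> h x y = exp (s x y)"
    then show "\<forall>x y. loss_of L_log h x y + ereal (s x y) \<le> 0"
      by (simp add: loss_of_def L_log_def)
  qed
qed

end
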